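(* Let $n\ge1$, $m\leq2^{n+1}$, and let $I$ be a homogeneous saturated bi-ideal of $H=\mathrm{CK}(n)^*(\mathrm{SO}_m)$. Let $k\ge1$ be an integer with $2^n-1-2k\ge1$. If $e_{2^n-1-2k}\in I$, then $e_{2^n-1-k}\in I$.
   Context: Base field of characteristic $0$, prime $2$. $\mathrm{CK}(n)^*=\Omega^*\otimes_{\mathbb L}\mathbb F_2[v_n]$ algebraic connective Morava K-theory, $|v_n|=1-2^n$. For $m\le2^{n+1}$, $H=\mathbb F_2[v_n][e_1,\dots,e_s]/(e_i^2-e_{2i})$, $s=\lfloor\frac{m-1}{2}\rfloor$, $e_j=0$ for $j>s$, with generators $e_i$ ($\deg e_i=i$) whose co-multiplication (induced by group multiplication of the split $\mathrm{SO}_m$) is: with $\langle t\rangle=2^n-1-t$ and $\nu_2$ the 2-adic valuation, $\widetilde\Delta(e_{\langle 2k\rangle})=\sum_{i=0}^{\nu_2(k)}v_n^{i+1}e_{\langle k/2^i\rangle}\otimes e_{\langle k/2^i\rangle}\prod_{j<i}(e_{\langle k/2^j\rangle}\otimes1+1\otimes e_{\langle k/2^j\rangle})$ for $0<k<2^{n-1}$ and $\widetilde\Delta(e_{2^n-1})=v_ne_{2^n-1}\otimes e_{2^n-1}$, where $\widetilde\Delta(x)=\Delta(x)-x\otimes1-1\otimes x$. A bi-ideal is an ideal $I$ with $\Delta(I)\subseteq I\otimes H+H\otimes I$ and $\varepsilon(I)=0$; saturated means $v_nx\in I\Rightarrow x\in I$. *)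

theory Defs
  imports "HOL-Library.Poly_Mapping" "HOL-Library.Z2" "HOL-Computational_Algebra.Primes"
begin

type_synonym 'v mpoly = "('v \<Rightarrow>\<^sub>0 nat) \<Rightarrow>\<^sub>0 bit"

definition mvar :: "'v \<Rightarrow> 'v mpoly" where
  "mvar x = Poly_Mapping.single (Poly_Mapping.single x 1) 1"

definition mconst :: "bit \<Rightarrow> 'v mpoly" where
  "mconst c = Poly_Mapping.single 0 c"

definition peval :: "('v \<Rightarrow> 'w mpoly) \<Rightarrow> 'v mpoly \<Rightarrow> 'w mpoly" where
  "peval f p = (\<Sum>mon\<in>Poly_Mapping.keys p. mconst (Poly_Mapping.lookup p mon) *
                   (\<Prod>x\<in>Poly_Mapping.keys (mon :: 'v \<Rightarrow>\<^sub>0 nat). f x ^ Poly_Mapping.lookup mon x))"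

definition is_ideal :: "'a::comm_ring_1 set \<Rightarrow> bool" where
  "is_ideal I \<longleftrightarrow> 0 \<in> I \<and> (\<forall>x\<in>I. \<forall>y\<in>I. x + y \<in> I) \<and> (\<forall>a. \<forall>x\<in>I. a * x \<in> I)"

definition gen_ideal :: "'a::comm_ring_1 set \<Rightarrow> 'a set" where
  "gen_ideal S = \<Inter>{I. is_ideal I \<and> S \<subseteq> I}"

section \<open>The algebra H = CK(n)^*(SO_m), presented as F_2[v][e_1,e_2,...] modulo J\<close>

text \<open>Variables of H: v (= v_n) and e_i.  Variables of H \<otimes> H over F_2[v]:
  v, e_i \<otimes> 1 (TL i) and 1 \<otimes> e_i (TR i).\<close>
datatype hvar = Vv | E nat
datatype tvar = TV | TL nat | TR nat

definition s_of :: "nat \<Rightarrow> nat" where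
  "s_of m = (m - 1) div 2"

text \<open>Defining relations: e_i^2 = e_{2i} for 1 \<le> i \<le> s, e_j = 0 for j > s
  (and the unused index 0 is killed as well).\<close>
definition relJ :: "nat \<Rightarrow> hvar mpoly set" where
  "relJ m = gen_ideal
     ({mvar (E i) ^ 2 - mvar (E (2 * i)) | i. 1 \<le> i \<and> i \<le> s_of m}
      \<union> {mvar (E j) | j. j > s_of m} \<union> {mvar (E 0)})"

definition br :: "nat \<Rightarrow> nat \<Rightarrow> nat" where
  "br n t = 2 ^ n - 1 - t"

definition delta_odd :: "nat \<Rightarrow> nat \<Rightarrow> tvar mpoly" where
  "delta_odd n i =
     (if i = 2 ^ n - 1 then
        mvar (TL i) + mvar (TR i) + mvar TV * mvar (TL i) * mvar (TR i)
      else if i < 2 ^ n - 1 then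
        (let k = (2 ^ n - 1 - i) div 2 in
          mvar (TL i) + mvar (TR i) +
          (\<Sum>j\<le>multiplicity (2::nat) k.
             mvar TV ^ (j + 1) * mvar (TL (br n (k div 2 ^ j))) * mvar (TR (br n (k div 2 ^ j)))
             * (\<Prod>l<j. mvar (TL (br n (k div 2 ^ l))) + mvar (TR (br n (k div 2 ^ l))))))
      else mvar (TL i) + mvar (TR i))"

text \<open>All generators: e_{2i} = e_i^2, so Delta(e_{2i}) = Delta(e_i)^2.\<close>
function dgen :: "nat \<Rightarrow> nat \<Rightarrow> tvar mpoly" where
  "dgen n i = (if i = 0 then mvar (TL 0) + mvar (TR 0)
               else if odd i then delta_odd n i
               else (dgen n (i div 2)) ^ 2)"
  by pat_completeness auto
termination by (relation "measure snd") auto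

definition Delta :: "nat \<Rightarrow> hvar mpoly \<Rightarrow> tvar mpoly" where
  "Delta n = peval (\<lambda>x. case x of Vv \<Rightarrow> mvar TV | E i \<Rightarrow> dgen n i)"

definition counit :: "hvar mpoly \<Rightarrow> hvar mpoly" where
  "counit = peval (\<lambda>x. case x of Vv \<Rightarrow> mvar Vv | E i \<Rightarrow> 0)"

definition embL :: "hvar mpoly \<Rightarrow> tvar mpoly" where
  "embL = peval (\<lambda>x. case x of Vv \<Rightarrow> mvar TV | E i \<Rightarrow> mvar (TL i))"

definition embR :: "hvar mpoly \<Rightarrow> tvar mpoly" where
  "embR = peval (\<lambda>x. case x of Vv \<Rightarrow> mvar TV | E i \<Rightarrow> mvar (TR i))"

definition wt :: "nat \<Rightarrow> hvar \<Rightarrow> int" where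
  "wt n x = (case x of Vv \<Rightarrow> 1 - 2 ^ n | E i \<Rightarrow> int i)"

definition hdeg :: "nat \<Rightarrow> (hvar \<Rightarrow>\<^sub>0 nat) \<Rightarrow> int" where
  "hdeg n mon = (\<Sum>x\<in>Poly_Mapping.keys mon. wt n x * int (Poly_Mapping.lookup mon x))"

definition hcomp :: "nat \<Rightarrow> int \<Rightarrow> hvar mpoly \<Rightarrow> hvar mpoly" where
  "hcomp n d p = Abs_poly_mapping (\<lambda>mon. if hdeg n mon = d then Poly_Mapping.lookup p mon else 0)"

text \<open>An ideal of H is represented by its preimage I in F_2[v][e_1,e_2,...],
  i.e. an ideal containing relJ m.\<close>
definition H_ideal :: "nat \<Rightarrow> hvar mpoly set \<Rightarrow> bool" where
  "H_ideal m I \<longleftrightarrow> is_ideal I \<and> relJ m \<subseteq> I"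

definition homogeneous_ideal :: "nat \<Rightarrow> hvar mpoly set \<Rightarrow> bool" where
  "homogeneous_ideal n I \<longleftrightarrow> (\<forall>p\<in>I. \<forall>d. hcomp n d p \<in> I)"

definition saturated :: "hvar mpoly set \<Rightarrow> bool" where
  "saturated I \<longleftrightarrow> (\<forall>x. mvar Vv * x \<in> I \<longrightarrow> x \<in> I)"

text \<open>Bi-ideal: Delta(I) \<subseteq> I \<otimes> H + H \<otimes> I and counit(I) = 0.  The preimage of
  I \<otimes> H + H \<otimes> I in F_2[v][e_i \<otimes> 1, 1 \<otimes> e_i] is the ideal generated by the
  two copies of (the preimage of) I.\<close>
definition bi_ideal :: "nat \<Rightarrow> nat \<Rightarrow> hvar mpoly set \<Rightarrow> bool" where
  "bi_ideal n m I \<longleftrightarrow> H_ideal m I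
     \<and> (\<forall>x\<in>I. Delta n x \<in> gen_ideal (embL ` I \<union> embR ` I))
     \<and> (\<forall>x\<in>I. counit x = 0)"

end

theory Submission
  imports Defs "HOL.Vector_Spaces"
begin

lemma bit_cases2: "(c::bit) = 0 \<or> c = 1" by (cases c) auto

lemma mconst_0[simp]: "mconst 0 = 0" by (simp add: mconst_def)
lemma mconst_1[simp]: "mconst 1 = 1" by (simp add: mconst_def)
lemma mconst_add: "mconst (a + b) = mconst a + mconst b" by (simp only: mconst_def single_add)
lemma mconst_mult: "mconst (a * b) = mconst a * mconst b" by (simp add: mconst_def mult_single)
lemma mconst_single: "mconst c * Poly_Mapping.single m 1 = Poly_Mapping.single m c"
  by (simp add: mconst_def mult_single)

lemma mvar_pow: "mvar x ^ k = Poly_Mapping.single (Poly_Mapping.single x k) 1"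
proof (induction k)
  case 0 then show ?case by simp
next
  case (Suc k)
  have "mvar x ^ Suc k = mvar x * mvar x ^ k" by simp
  also have "\<dots> = Poly_Mapping.single (Poly_Mapping.single x 1 + Poly_Mapping.single x k) 1"
    by (simp only: Suc) (simp add: mvar_def mult_single)
  also have "Poly_Mapping.single x 1 + Poly_Mapping.single x k = Poly_Mapping.single x (Suc k)"
    by (simp only: single_add[symmetric] plus_1_eq_Suc)
  finally show ?case .
qed

lemma prod_single: "finite S \<Longrightarrow> (\<Prod>x\<in>S. Poly_Mapping.single (m x) (1::'b::comm_semiring_1)) = Poly_Mapping.single (\<Sum>x\<in>S. m x) 1"
  by (induction S rule: finite_induct) (auto simp: mult_single)

lemma bit_add_self[simp]: "(b::bit) + b = 0" by (cases b) auto

lemma mpoly_add_self: "(p::'v mpoly) + p = 0"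
  by (rule poly_mapping_eqI) (simp only: lookup_add lookup_zero bit_add_self)

lemma mpoly_two[simp]: "2 * (p::'v mpoly) = 0"
  by (simp only: mult_2 mpoly_add_self)

lemma mpoly_minus: "(p::'v mpoly) - q = p + q"
  by (rule poly_mapping_eqI) (simp add: lookup_minus lookup_add)

section \<open>Linear extension\<close>

definition lin :: "(('v \<Rightarrow>\<^sub>0 nat) \<Rightarrow> 'w mpoly) \<Rightarrow> 'v mpoly \<Rightarrow> 'w mpoly" where
  "lin g p = (\<Sum>\<mu>\<in>Poly_Mapping.keys p. mconst (Poly_Mapping.lookup p \<mu>) * g \<mu>)"

lemma lin_superset: "finite S \<Longrightarrow> Poly_Mapping.keys p \<subseteq> S \<Longrightarrow>
   lin g p = (\<Sum>\<mu>\<in>S. mconst (Poly_Mapping.lookup p \<mu>) * g \<mu>)"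
  unfolding lin_def by (rule sum.mono_neutral_left) (auto simp: in_keys_iff)

lemma lin_add: "lin g (p + q) = lin g p + lin g q"
  unfolding lin_def
  by (rule setsum_keys_plus_distrib[where f="\<lambda>\<mu> c. mconst c * g \<mu>"]) (auto simp: mconst_add distrib_right)

lemma lin_zero[simp]: "lin g 0 = 0" by (simp add: lin_def)

lemma lin_single: "lin g (Poly_Mapping.single \<mu> c) = mconst c * g \<mu>"
  by (cases "c = 0") (simp_all add: lin_def)

lemma lin_single1[simp]: "lin g (Poly_Mapping.single \<mu> 1) = g \<mu>"
  by (simp add: lin_single)

lemma lin_sum: "lin g (\<Sum>j\<in>J. p j) = (\<Sum>j\<in>J. lin g (p j))"
  by (induction J rule: infinite_finite_induct) (auto simp: lin_add)

lemma lin_mconst: "lin g (mconst c * p) = mconst c * lin g p"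
  using bit_cases2[of c] by auto

lemma lin_cong: "(\<And>\<mu>. \<mu> \<in> Poly_Mapping.keys p \<Longrightarrow> g \<mu> = h \<mu>) \<Longrightarrow> lin g p = lin h p"
  unfolding lin_def by (auto intro: sum.cong)

lemma lin_mult_left: "c * lin g p = lin (\<lambda>\<mu>. c * g \<mu>) p"
  unfolding lin_def sum_distrib_left by (simp add: ac_simps)

lemma lin_mult_right: "lin g p * c = lin (\<lambda>\<mu>. g \<mu> * c) p"
  unfolding lin_def sum_distrib_right by (simp add: ac_simps)

lemma lin_fun_add: "lin (\<lambda>\<mu>. g \<mu> + h \<mu>) p = lin g p + lin h p"
  unfolding lin_def by (simp add: distrib_left sum.distrib)

lemma lin_fun_zero[simp]: "lin (\<lambda>\<mu>. 0) p = 0"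
  unfolding lin_def by simp

lemma lin_fun_sum: "finite D \<Longrightarrow> lin (\<lambda>\<mu>. \<Sum>d\<in>D. g d \<mu>) p = (\<Sum>d\<in>D. lin (g d) p)"
  by (induction D rule: finite_induct) (simp_all add: lin_fun_add)

lemma lin_decomp: "lin (\<lambda>\<mu>. Poly_Mapping.single \<mu> 1) p = p"
proof (rule poly_mapping_eqI)
  fix \<rho>
  show "Poly_Mapping.lookup (lin (\<lambda>\<mu>. Poly_Mapping.single \<mu> 1) p) \<rho> = Poly_Mapping.lookup p \<rho>"
    unfolding lin_def by (simp add: mconst_single lookup_sum lookup_single when_def in_keys_iff)
qed

lemma lin_hom:
  assumes add: "\<And>x y. T (x + y) = T x + T y" and sc: "\<And>c x. T (mconst c * x) = mconst c * T x"
  shows "T (lin g p) = lin (\<lambda>\<mu>. T (g \<mu>)) p"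
proof -
  have T0: "T 0 = 0" using add[of 0 0] by simp
  have "T (\<Sum>\<mu>\<in>S. mconst (Poly_Mapping.lookup p \<mu>) * g \<mu>) = (\<Sum>\<mu>\<in>S. mconst (Poly_Mapping.lookup p \<mu>) * T (g \<mu>))" for S
    by (induction S rule: infinite_finite_induct) (simp_all add: T0 add sc)
  then show ?thesis unfolding lin_def .
qed

lemma lin_lin: "lin g (lin h p) = lin (\<lambda>\<mu>. lin g (h \<mu>)) p"
  by (rule lin_hom) (simp_all add: lin_add lin_mconst)

lemma lin_in:
  assumes "0 \<in> K" "\<And>x y. x \<in> K \<Longrightarrow> y \<in> K \<Longrightarrow> x + y \<in> K" "\<And>\<mu>. \<mu> \<in> Poly_Mapping.keys p \<Longrightarrow> g \<mu> \<in> K"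
  shows "lin g p \<in> K"
proof -
  have "\<forall>\<mu>\<in>S. g \<mu> \<in> K \<Longrightarrow> (\<Sum>\<mu>\<in>S. mconst (Poly_Mapping.lookup p \<mu>) * g \<mu>) \<in> K" for S
  proof (induction S rule: infinite_finite_induct)
    case (insert x F)
    then show ?case using assms(1,2) bit_cases2[of "Poly_Mapping.lookup p x"] by auto
  qed (use assms in auto)
  then show ?thesis unfolding lin_def using assms(3) by blast
qed

lemma lin_vanish: "(\<And>\<mu>. \<mu> \<in> Poly_Mapping.keys p \<Longrightarrow> g \<mu> = 0) \<Longrightarrow> lin g p = 0"
  using lin_cong[of p g "\<lambda>_. 0"] by simp

lemma lookup_mconst_mult: "Poly_Mapping.lookup (mconst c * q) \<rho> = c * Poly_Mapping.lookup q \<rho>"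
  by (simp add: mconst_def flip: mult_map_scale_conv_mult) (simp add: Poly_Mapping.map.rep_eq)

lemma lookup_lin: "Poly_Mapping.lookup (lin g p) \<rho> = (\<Sum>\<mu>\<in>Poly_Mapping.keys p. Poly_Mapping.lookup p \<mu> * Poly_Mapping.lookup (g \<mu>) \<rho>)"
  unfolding lin_def by (simp add: lookup_sum lookup_mconst_mult)

lemma peval_lin: "peval f = lin (\<lambda>mon. \<Prod>x\<in>Poly_Mapping.keys mon. f x ^ Poly_Mapping.lookup mon x)"
  unfolding peval_def lin_def by (rule ext) simp

section \<open>Monomial maps\<close>

definition msing :: "'b option \<Rightarrow> nat \<Rightarrow> ('b \<Rightarrow>\<^sub>0 nat)" where
  "msing o' c = (case o' of None \<Rightarrow> 0 | Some y \<Rightarrow> Poly_Mapping.single y c)"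

lemma msing_simps[simp]: "msing None c = 0" "msing (Some y) c = Poly_Mapping.single y c" "msing o' 0 = 0"
  by (auto simp: msing_def split: option.splits)

lemma msing_add: "msing o' (a + b) = msing o' a + msing o' b"
  by (auto simp: msing_def single_add split: option.splits)

definition mlin :: "('a \<Rightarrow> 'b option) \<Rightarrow> ('a \<Rightarrow>\<^sub>0 nat) \<Rightarrow> ('b \<Rightarrow>\<^sub>0 nat)" where
  "mlin g \<mu> = (\<Sum>x\<in>Poly_Mapping.keys \<mu>. msing (g x) (Poly_Mapping.lookup \<mu> x))"

lemma mlin_add: "mlin g (\<mu> + \<nu>) = mlin g \<mu> + mlin g \<nu>"
  unfolding mlin_def by (rule setsum_keys_plus_distrib) (auto simp: msing_add)

lemma mlin_zero[simp]: "mlin g 0 = 0" by (simp add: mlin_def)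

lemma mlin_single[simp]: "mlin g (Poly_Mapping.single x c) = msing (g x) c"
  by (cases "c = 0") (simp_all add: mlin_def)

lemma mlin_sum: "mlin g (\<Sum>j\<in>J. f j) = (\<Sum>j\<in>J. mlin g (f j))"
  by (induction J rule: infinite_finite_induct) (auto simp: mlin_add)

lemma mlin_msing: "mlin g (msing o' c) = msing (Option.bind o' g) c"
  by (cases o') auto

lemma mlin_mlin: "mlin g (mlin h \<mu>) = mlin (\<lambda>x. Option.bind (h x) g) \<mu>"
proof -
  have "mlin g (mlin h \<mu>) = (\<Sum>x\<in>Poly_Mapping.keys \<mu>. mlin g (msing (h x) (Poly_Mapping.lookup \<mu> x)))"
    by (simp only: mlin_def[of h \<mu>] mlin_sum)
  then show ?thesis by (simp add: mlin_msing mlin_def[of _ \<mu>])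
qed

lemma mlin_cong: "(\<And>x. g x = h x) \<Longrightarrow> mlin g \<mu> = mlin h \<mu>"
  by (metis ext)

lemma mlin_none: "(\<And>x. g x = None) \<Longrightarrow> mlin g \<mu> = 0"
  by (simp add: mlin_def)

lemma lookup_mlin: "Poly_Mapping.lookup (mlin g \<mu>) y = (\<Sum>x\<in>Poly_Mapping.keys \<mu>. if g x = Some y then Poly_Mapping.lookup \<mu> x else 0)"
  unfolding mlin_def lookup_sum by (intro sum.cong refl) (auto simp: msing_def lookup_single when_def split: option.splits)

section \<open>Degrees\<close>

definition ew :: "hvar \<Rightarrow> nat" where "ew x = (case x of Vv \<Rightarrow> 0 | E i \<Rightarrow> i)"

definition edeg :: "(hvar \<Rightarrow>\<^sub>0 nat) \<Rightarrow> nat" where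
  "edeg \<mu> = (\<Sum>x\<in>Poly_Mapping.keys \<mu>. ew x * Poly_Mapping.lookup \<mu> x)"

lemma edeg_add: "edeg (\<mu> + \<nu>) = edeg \<mu> + edeg \<nu>"
  unfolding edeg_def by (rule setsum_keys_plus_distrib) (auto simp: distrib_left)

lemma edeg_zero[simp]: "edeg 0 = 0" by (simp add: edeg_def)

lemma edeg_single[simp]: "edeg (Poly_Mapping.single x c) = ew x * c"
  by (cases "c = 0") (simp_all add: edeg_def)

lemma edeg_sum: "edeg (\<Sum>j\<in>J. f j) = (\<Sum>j\<in>J. edeg (f j))"
  by (induction J rule: infinite_finite_induct) (auto simp: edeg_add)

definition vexp :: "(hvar \<Rightarrow>\<^sub>0 nat) \<Rightarrow> nat" where "vexp \<mu> = Poly_Mapping.lookup \<mu> Vv"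

definition gL :: "hvar \<Rightarrow> tvar option" where "gL x = Some (case x of Vv \<Rightarrow> TV | E i \<Rightarrow> TL i)"
definition gR :: "hvar \<Rightarrow> tvar option" where "gR x = Some (case x of Vv \<Rightarrow> TV | E i \<Rightarrow> TR i)"
definition gLm :: "tvar \<Rightarrow> hvar option" where "gLm t = (case t of TL i \<Rightarrow> Some (E i) | _ \<Rightarrow> None)"
definition gRm :: "tvar \<Rightarrow> hvar option" where "gRm t = (case t of TR i \<Rightarrow> Some (E i) | _ \<Rightarrow> None)"
definition gD :: "hvar \<Rightarrow> hvar option" where "gD x = (case x of Vv \<Rightarrow> None | E i \<Rightarrow> Some (E i))"

abbreviation "Lm \<equiv> mlin gLm"
abbreviation "Rm \<equiv> mlin gRm"
abbreviation "dropV \<equiv> mlin gD"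
abbreviation "renL \<equiv> mlin gL"
abbreviation "renR \<equiv> mlin gR"

lemma Lm_renL: "Lm (renL \<nu>) = dropV \<nu>"
  by (simp add: mlin_mlin) (rule mlin_cong, simp add: gL_def gLm_def gD_def split: hvar.splits)
lemma Rm_renL: "Rm (renL \<nu>) = 0"
  by (simp add: mlin_mlin) (rule mlin_none, simp add: gL_def gRm_def split: hvar.splits)
lemma Lm_renR: "Lm (renR \<nu>) = 0"
  by (simp add: mlin_mlin) (rule mlin_none, simp add: gR_def gLm_def split: hvar.splits)
lemma Rm_renR: "Rm (renR \<nu>) = dropV \<nu>"
  by (simp add: mlin_mlin) (rule mlin_cong, simp add: gR_def gRm_def gD_def split: hvar.splits)
lemma dropV_Lm: "dropV (Lm \<mu>) = Lm \<mu>"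
  by (simp add: mlin_mlin) (rule mlin_cong, simp add: gLm_def gD_def split: tvar.splits)
lemma dropV_Rm: "dropV (Rm \<mu>) = Rm \<mu>"
  by (simp add: mlin_mlin) (rule mlin_cong, simp add: gRm_def gD_def split: tvar.splits)

lemma edeg_mlin: "edeg (mlin g \<mu>) = (\<Sum>x\<in>Poly_Mapping.keys \<mu>. (case g x of None \<Rightarrow> 0 | Some y \<Rightarrow> ew y) * Poly_Mapping.lookup \<mu> x)"
  unfolding mlin_def edeg_sum by (rule sum.cong) (auto simp: msing_def split: option.splits)

lemma edeg_dropV: "edeg (dropV \<mu>) = edeg \<mu>"
  unfolding edeg_mlin edeg_def[of \<mu>] by (rule sum.cong) (auto simp: gD_def ew_def split: hvar.splits)

lemma lookup_dropV: "Poly_Mapping.lookup (dropV \<mu>) y = (if y = Vv then 0 else Poly_Mapping.lookup \<mu> y)"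
proof (cases y)
  case Vv then show ?thesis by (simp add: lookup_mlin gD_def split: hvar.splits)
next
  case (E i)
  have "Poly_Mapping.lookup (dropV \<mu>) y = (\<Sum>x\<in>Poly_Mapping.keys \<mu>. if x = E i then Poly_Mapping.lookup \<mu> x else 0)"
    unfolding lookup_mlin E by (rule sum.cong) (auto simp: gD_def split: hvar.splits)
  also have "\<dots> = Poly_Mapping.lookup \<mu> (E i)" by (simp add: in_keys_iff)
  finally show ?thesis using E by simp
qed

lemma dropV_vexp: "dropV \<mu> + Poly_Mapping.single Vv (vexp \<mu>) = \<mu>"
  by (rule poly_mapping_eqI) (simp add: lookup_add lookup_dropV lookup_single when_def vexp_def)

lemma vexp_dropV: "vexp (dropV \<mu>) = 0" by (simp add: vexp_def lookup_dropV)

lemma prod_mvar_mon: "(\<Prod>x\<in>Poly_Mapping.keys \<nu>. mvar (h x) ^ Poly_Mapping.lookup \<nu> x) = Poly_Mapping.single (mlin (\<lambda>x. Some (h x)) \<nu>) 1"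
  by (simp add: mvar_pow prod_single mlin_def)

lemma embL_lin: "embL = lin (\<lambda>\<nu>. Poly_Mapping.single (renL \<nu>) 1)"
proof -
  have "(\<lambda>x. case x of Vv \<Rightarrow> mvar TV | E i \<Rightarrow> mvar (TL i)) = (\<lambda>x. mvar (case x of Vv \<Rightarrow> TV | E i \<Rightarrow> TL i))"
    by (auto split: hvar.splits)
  moreover have "(\<lambda>x. Some (case x of Vv \<Rightarrow> TV | E i \<Rightarrow> TL i)) = gL" by (simp add: gL_def fun_eq_iff)
  ultimately show ?thesis unfolding embL_def peval_lin by (simp add: prod_mvar_mon)
qed

lemma embR_lin: "embR = lin (\<lambda>\<nu>. Poly_Mapping.single (renR \<nu>) 1)"
proof -
  have "(\<lambda>x. case x of Vv \<Rightarrow> mvar TV | E i \<Rightarrow> mvar (TR i)) = (\<lambda>x. mvar (case x of Vv \<Rightarrow> TV | E i \<Rightarrow> TR i))"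
    by (auto split: hvar.splits)
  moreover have "(\<lambda>x. Some (case x of Vv \<Rightarrow> TV | E i \<Rightarrow> TR i)) = gR" by (simp add: gR_def fun_eq_iff)
  ultimately show ?thesis unfolding embR_def peval_lin by (simp add: prod_mvar_mon)
qed

lemma peval_mvar: "peval f (mvar x) = f x"
  by (simp add: peval_lin mvar_def)

definition pi :: "hvar mpoly \<Rightarrow> hvar mpoly" where
  "pi = lin (\<lambda>\<mu>. Poly_Mapping.single (dropV \<mu>) 1)"

lemma pi_add: "pi (x + y) = pi x + pi y" by (simp add: pi_def lin_add)
lemma pi_zero[simp]: "pi 0 = 0" by (simp add: pi_def)
lemma pi_mconst: "pi (mconst c * x) = mconst c * pi x" by (simp add: pi_def lin_mconst)

lemma single_mult_lin: "Poly_Mapping.single m 1 * x = lin (\<lambda>\<nu>. Poly_Mapping.single (m + \<nu>) 1) x"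
proof -
  have "Poly_Mapping.single m 1 * x = Poly_Mapping.single m 1 * lin (\<lambda>\<nu>. Poly_Mapping.single \<nu> 1) x"
    by (simp add: lin_decomp)
  also have "\<dots> = lin (\<lambda>\<nu>. Poly_Mapping.single (m + \<nu>) 1) x"
    by (simp add: lin_mult_left mult_single)
  finally show ?thesis .
qed

lemma pi_mult_mon: "pi (Poly_Mapping.single m 1 * x) = Poly_Mapping.single (dropV m) 1 * pi x"
proof -
  have "pi (Poly_Mapping.single m 1 * x) = lin (\<lambda>\<nu>. Poly_Mapping.single (dropV (m + \<nu>)) 1) x"
    unfolding single_mult_lin pi_def lin_lin by simp
  also have "\<dots> = Poly_Mapping.single (dropV m) 1 * pi x"
    unfolding pi_def lin_mult_left by (simp add: mult_single mlin_add)
  finally show ?thesis .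
qed

definition Psi :: "(hvar mpoly \<Rightarrow> bit) \<Rightarrow> tvar mpoly \<Rightarrow> hvar mpoly" where
  "Psi f = lin (\<lambda>\<mu>. mconst (f (Poly_Mapping.single (Rm \<mu>) 1)) * Poly_Mapping.single (Lm \<mu>) 1)"

lemma Psi_add: "Psi f (x + y) = Psi f x + Psi f y" by (simp add: Psi_def lin_add)
lemma Psi_zero[simp]: "Psi f 0 = 0" by (simp add: Psi_def)
lemma Psi_sum: "Psi f (\<Sum>j\<in>J. p j) = (\<Sum>j\<in>J. Psi f (p j))" by (simp add: Psi_def lin_sum)
lemma Psi_single: "Psi f (Poly_Mapping.single \<mu> 1) = mconst (f (Poly_Mapping.single (Rm \<mu>) 1)) * Poly_Mapping.single (Lm \<mu>) 1"
  by (simp add: Psi_def)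

lemma Psi_mult: "Psi f (c * q) = lin (\<lambda>\<mu>. Psi f (Poly_Mapping.single \<mu> 1 * q)) c"
proof -
  have e: "c * q = lin (\<lambda>\<mu>. Poly_Mapping.single \<mu> 1 * q) c"
    using lin_mult_right[of "\<lambda>\<mu>. Poly_Mapping.single \<mu> 1" c q] by (simp only: lin_decomp)
  show ?thesis unfolding e Psi_def by (rule lin_lin)
qed

lemma Psi_embL: "Psi f (Poly_Mapping.single \<mu> 1 * embL x) =
   mconst (f (Poly_Mapping.single (Rm \<mu>) 1)) * pi (Poly_Mapping.single (Lm \<mu>) 1 * x)"
proof -
  have "Psi f (Poly_Mapping.single \<mu> 1 * embL x) = lin (\<lambda>\<nu>. Psi f (Poly_Mapping.single (\<mu> + renL \<nu>) 1)) x"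
    unfolding embL_lin lin_mult_left Psi_def lin_lin by (simp add: mult_single)
  also have "\<dots> = lin (\<lambda>\<nu>. mconst (f (Poly_Mapping.single (Rm \<mu>) 1)) * (Poly_Mapping.single (Lm \<mu>) 1 * Poly_Mapping.single (dropV \<nu>) 1)) x"
    by (simp add: Psi_single mlin_add Lm_renL Rm_renL mult_single)
  also have "\<dots> = mconst (f (Poly_Mapping.single (Rm \<mu>) 1)) * pi (Poly_Mapping.single (Lm \<mu>) 1 * x)"
    by (subst pi_mult_mon) (simp add: dropV_Lm pi_def lin_mult_left)
  finally show ?thesis .
qed

lemma f_mconst:
  assumes fadd: "\<And>x y. f (x + y) = f x + f y"
  shows "f (mconst c * x) = c * f x"
proof -
  have "f 0 = 0" using fadd[of 0 0] by simp
  then show ?thesis using bit_cases2[of c] by auto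
qed

lemma f_lin:
  assumes fadd: "\<And>x y. f (x + y) = f x + f y"
  shows "mconst (f (lin g p)) = lin (\<lambda>\<mu>. mconst (f (g \<mu>))) p"
proof -
  have h1: "\<And>x y. mconst (f (x+y)) = mconst (f x) + mconst (f y)" by (simp only: fadd mconst_add)
  have h2: "\<And>c x. mconst (f (mconst c * x)) = mconst c * mconst (f x)" by (simp only: f_mconst[OF fadd] mconst_mult)
  show ?thesis by (rule lin_hom[of "\<lambda>p. mconst (f p)" g p, OF h1 h2])
qed

lemma Psi_embR:
  assumes fadd: "\<And>x y. f (x + y) = f x + f y"
  shows "Psi f (Poly_Mapping.single \<mu> 1 * embR y) =
   mconst (f (pi (Poly_Mapping.single (Rm \<mu>) 1 * y))) * Poly_Mapping.single (Lm \<mu>) 1"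
proof -
  have "Psi f (Poly_Mapping.single \<mu> 1 * embR y) = lin (\<lambda>\<nu>. Psi f (Poly_Mapping.single (\<mu> + renR \<nu>) 1)) y"
    unfolding embR_lin lin_mult_left Psi_def lin_lin by (simp add: mult_single)
  also have "\<dots> = lin (\<lambda>\<nu>. mconst (f (Poly_Mapping.single (Rm \<mu> + dropV \<nu>) 1))) y * Poly_Mapping.single (Lm \<mu>) 1"
    by (simp add: Psi_single mlin_add Lm_renR Rm_renR lin_mult_right)
  also have "lin (\<lambda>\<nu>. mconst (f (Poly_Mapping.single (Rm \<mu> + dropV \<nu>) 1))) y = mconst (f (lin (\<lambda>\<nu>. Poly_Mapping.single (Rm \<mu> + dropV \<nu>) 1) y))"
    by (rule f_lin[OF fadd, symmetric])
  also have "lin (\<lambda>\<nu>. Poly_Mapping.single (Rm \<mu> + dropV \<nu>) 1) y = pi (Poly_Mapping.single (Rm \<mu>) 1 * y)"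
    by (subst pi_mult_mon) (simp add: dropV_Rm pi_def lin_mult_left mult_single)
  finally show ?thesis .
qed

inductive_set Gs :: "hvar mpoly set \<Rightarrow> tvar mpoly set" for I where
  Gs0: "0 \<in> Gs I"
| GsL: "p \<in> Gs I \<Longrightarrow> x \<in> I \<Longrightarrow> p + c * embL x \<in> Gs I"
| GsR: "p \<in> Gs I \<Longrightarrow> x \<in> I \<Longrightarrow> p + c * embR x \<in> Gs I"

lemma Gs_add: "q \<in> Gs I \<Longrightarrow> p \<in> Gs I \<Longrightarrow> p + q \<in> Gs I"
proof (induction q rule: Gs.induct)
  case Gs0 then show ?case by simp
next
  case (GsL q x c) then show ?case using Gs.GsL[of "p + q" I x c] by (simp add: add.assoc)
next
  case (GsR q x c) then show ?case using Gs.GsR[of "p + q" I x c] by (simp add: add.assoc)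
qed

lemma Gs_mult: "q \<in> Gs I \<Longrightarrow> a * q \<in> Gs I"
proof (induction q rule: Gs.induct)
  case Gs0 then show ?case by (simp add: Gs.Gs0)
next
  case (GsL q x c) then show ?case using Gs.GsL[of "a * q" I x "a * c"] by (simp add: distrib_left mult.assoc)
next
  case (GsR q x c) then show ?case using Gs.GsR[of "a * q" I x "a * c"] by (simp add: distrib_left mult.assoc)
qed

lemma gen_ideal_Gs: "gen_ideal (embL ` I \<union> embR ` I) \<subseteq> Gs I"
proof -
  have "is_ideal (Gs I)" unfolding is_ideal_def using Gs.Gs0 Gs_add Gs_mult by blast
  moreover have "embL ` I \<union> embR ` I \<subseteq> Gs I"
    using Gs.GsL[OF Gs.Gs0, of _ I 1] Gs.GsR[OF Gs.Gs0, of _ I 1] by auto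
  ultimately show ?thesis unfolding gen_ideal_def by blast
qed

lemma Psi_Gs:
  assumes fadd: "\<And>x y. f (x + y) = f x + f y"
    and fK: "\<And>z. z \<in> I \<Longrightarrow> f (pi z) = 0"
    and Iid: "is_ideal I"
    and p: "p \<in> Gs I"
  shows "Psi f p \<in> pi ` I"
proof -
  have I0: "0 \<in> I" and Iadd: "\<And>x y. x \<in> I \<Longrightarrow> y \<in> I \<Longrightarrow> x + y \<in> I" and Imul: "\<And>a x. x \<in> I \<Longrightarrow> a * x \<in> I"
    using Iid unfolding is_ideal_def by auto
  have K0: "0 \<in> pi ` I" using I0 by (metis image_eqI pi_zero)
  have Kadd: "u + w \<in> pi ` I" if uw: "u \<in> pi ` I" "w \<in> pi ` I" for u w
  proof -
    obtain x y where "x \<in> I" "y \<in> I" "u = pi x" "w = pi y" using uw by blast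
    then have "u + w = pi (x + y)" "x + y \<in> I" by (simp_all add: pi_add Iadd)
    then show ?thesis by blast
  qed
  have L: "Psi f (c * embL x) \<in> pi ` I" if x: "x \<in> I" for c x
    unfolding Psi_mult[of f c "embL x"] Psi_embL
  proof (rule lin_in[OF K0 Kadd])
    fix \<mu>
    have "Poly_Mapping.single (Lm \<mu>) 1 * x \<in> I" using x Imul by blast
    then have "mconst (f (Poly_Mapping.single (Rm \<mu>) 1)) * (Poly_Mapping.single (Lm \<mu>) 1 * x) \<in> I" using Imul by blast
    then show "mconst (f (Poly_Mapping.single (Rm \<mu>) 1)) * pi (Poly_Mapping.single (Lm \<mu>) 1 * x) \<in> pi ` I"
      by (metis image_eqI pi_mconst)
  qed
  have R: "Psi f (c * embR x) = 0" if x: "x \<in> I" for c x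
    unfolding Psi_mult[of f c "embR x"] Psi_embR[OF fadd]
  proof (rule lin_vanish)
    fix \<mu>
    have "Poly_Mapping.single (Rm \<mu>) 1 * x \<in> I" using x Imul by blast
    then have "f (pi (Poly_Mapping.single (Rm \<mu>) 1 * x)) = 0" by (rule fK)
    then show "mconst (f (pi (Poly_Mapping.single (Rm \<mu>) 1 * x))) * Poly_Mapping.single (Lm \<mu>) 1 = 0" by simp
  qed
  show ?thesis using p
  proof (induction p rule: Gs.induct)
    case Gs0 show ?case by (simp only: Psi_zero K0)
  next
    case (GsL p x c)
    show ?case unfolding Psi_add by (rule Kadd[OF GsL.IH L[OF GsL.hyps(2)]])
  next
    case (GsR p x c)
    show ?case unfolding Psi_add R[OF GsR.hyps(2)] using GsR.IH by (simp only: add_0_right)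
  qed
qed

lemma wt_eq: "wt n x = int (ew x) - (if x = Vv then int (2^n - 1) else 0)"
  by (cases x) (auto simp: wt_def ew_def of_nat_diff)

lemma hdeg_eq: "hdeg n \<mu> = int (edeg \<mu>) - int (2^n - 1) * int (vexp \<mu>)"
proof -
  have "hdeg n \<mu> = (\<Sum>x\<in>Poly_Mapping.keys \<mu>. int (ew x * Poly_Mapping.lookup \<mu> x) - (if x = Vv then int (2^n - 1) * int (Poly_Mapping.lookup \<mu> x) else 0))"
    unfolding hdeg_def wt_eq by (rule sum.cong) (auto simp: algebra_simps)
  also have "\<dots> = int (edeg \<mu>) - (\<Sum>x\<in>Poly_Mapping.keys \<mu>. if x = Vv then int (2^n - 1) * int (Poly_Mapping.lookup \<mu> x) else 0)"
    by (simp add: sum_subtractf edeg_def)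
  also have "(\<Sum>x\<in>Poly_Mapping.keys \<mu>. if x = Vv then int (2^n - 1) * int (Poly_Mapping.lookup \<mu> x) else 0) = int (2^n - 1) * int (vexp \<mu>)"
    by (simp add: sum.delta' vexp_def in_keys_iff)
  finally show ?thesis .
qed

lemma hcomp_lin: "hcomp n d p = lin (\<lambda>\<mu>. if hdeg n \<mu> = d then Poly_Mapping.single \<mu> 1 else 0) p"
proof (rule poly_mapping_eqI)
  fix \<rho>
  have fin: "finite {mon. (if hdeg n mon = d then Poly_Mapping.lookup p mon else 0) \<noteq> 0}"
    by (rule finite_subset[of _ "Poly_Mapping.keys p"]) (auto simp: in_keys_iff)
  have "Poly_Mapping.lookup (lin (\<lambda>\<mu>. if hdeg n \<mu> = d then Poly_Mapping.single \<mu> 1 else 0) p) \<rho>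
      = (\<Sum>\<mu>\<in>Poly_Mapping.keys p. if \<mu> = \<rho> then (if hdeg n \<rho> = d then Poly_Mapping.lookup p \<mu> else 0) else 0)"
    unfolding lookup_lin by (rule sum.cong) (auto simp: lookup_single when_def)
  also have "\<dots> = (if hdeg n \<rho> = d then Poly_Mapping.lookup p \<rho> else 0)"
    by (simp add: sum.delta in_keys_iff)
  finally show "Poly_Mapping.lookup (hcomp n d p) \<rho> = Poly_Mapping.lookup (lin (\<lambda>\<mu>. if hdeg n \<mu> = d then Poly_Mapping.single \<mu> 1 else 0) p) \<rho>"
    unfolding hcomp_def using fin by simp
qed

lemma ideal_sum: "is_ideal I \<Longrightarrow> (\<And>d. d \<in> D \<Longrightarrow> Q d \<in> I) \<Longrightarrow> (\<Sum>d\<in>D. Q d) \<in> I"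
  unfolding is_ideal_def by (induction D rule: infinite_finite_induct) auto

lemma sat_pow: "saturated I \<Longrightarrow> mvar Vv ^ C * x \<in> I \<Longrightarrow> x \<in> I"
proof (induction C)
  case (Suc C)
  then have "mvar Vv * (mvar Vv ^ C * x) \<in> I" by (simp add: mult.assoc)
  then show ?case using Suc unfolding saturated_def by blast
qed simp

lemma lift:
  fixes n a :: nat and I :: "hvar mpoly set"
  assumes Iid: "is_ideal I" and hom: "homogeneous_ideal n I" and sat: "saturated I"
    and aN: "a < 2^n - 1" and z: "z \<in> I"
    and w: "\<forall>m\<in>Poly_Mapping.keys w. edeg m mod (2^n - 1) \<noteq> a"
    and eq: "mvar (E a) = pi z + w"
  shows "mvar (E a) \<in> I"
proof -
  define N where "N = (2::nat)^n - 1"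
  have Npos: "N > 0" using aN N_def by simp
  define C where "C = Max (insert 0 (vexp ` Poly_Mapping.keys z))"
  have vC: "vexp \<mu> \<le> C" if "\<mu> \<in> Poly_Mapping.keys z" for \<mu>
    unfolding C_def using that by (intro Max_ge) auto
  define T where "T d = nat ((d - int a) div int N + int C)" for d :: int
  define Gf where "Gf m = (if edeg m mod N = a then Poly_Mapping.single (m + Poly_Mapping.single Vv ((edeg m - a) div N + C)) (1::bit) else 0)" for m
  define Dset where "Dset = hdeg n ` Poly_Mapping.keys z"
  define Q where "Q d = (if d mod int N = int a then mvar Vv ^ T d * hcomp n d z else 0)" for d
  have QI: "(\<Sum>d\<in>Dset. Q d) \<in> I"
  proof (rule ideal_sum[OF Iid])
    fix d
    have "hcomp n d z \<in> I" using hom z unfolding homogeneous_ideal_def by blast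
    then show "Q d \<in> I" using Iid unfolding Q_def is_ideal_def by auto
  qed
  have Qlin: "Q d = lin (\<lambda>\<mu>. if hdeg n \<mu> = d then (if d mod int N = int a then Poly_Mapping.single (\<mu> + Poly_Mapping.single Vv (T d)) 1 else 0) else 0) z" for d
  proof (cases "d mod int N = int a")
    case True
    have "Q d = lin (\<lambda>\<mu>. mvar Vv ^ T d * (if hdeg n \<mu> = d then Poly_Mapping.single \<mu> 1 else 0)) z"
      unfolding Q_def hcomp_lin lin_mult_left using True by simp
    also have "\<dots> = lin (\<lambda>\<mu>. if hdeg n \<mu> = d then (if d mod int N = int a then Poly_Mapping.single (\<mu> + Poly_Mapping.single Vv (T d)) 1 else 0) else 0) z"
      using True by (intro lin_cong) (simp add: mvar_pow mult_single add.commute)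
    finally show ?thesis .
  next
    case False
    have "lin (\<lambda>\<mu>. if hdeg n \<mu> = d then (if d mod int N = int a then Poly_Mapping.single (\<mu> + Poly_Mapping.single Vv (T d)) (1::bit) else 0) else 0) z = 0"
      by (rule lin_vanish) (use False in auto)
    then show ?thesis unfolding Q_def using False by simp
  qed
  have fin: "finite Dset" unfolding Dset_def by simp
  have S1: "(\<Sum>d\<in>Dset. Q d) = lin (\<lambda>\<mu>. \<Sum>d\<in>Dset. if hdeg n \<mu> = d then (if d mod int N = int a then Poly_Mapping.single (\<mu> + Poly_Mapping.single Vv (T d)) 1 else 0) else 0) z"
    unfolding Qlin by (rule lin_fun_sum[OF fin, symmetric])
  have S2: "\<dots> = lin (\<lambda>\<mu>. Gf (dropV \<mu>)) z"
  proof (rule lin_cong)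
    fix \<mu> assume mu: "\<mu> \<in> Poly_Mapping.keys z"
    have inD: "hdeg n \<mu> \<in> Dset" unfolding Dset_def using mu by simp
    have hd: "hdeg n \<mu> = int (edeg \<mu>) - int N * int (vexp \<mu>)" using hdeg_eq[of n \<mu>] N_def by simp
    have cls: "(hdeg n \<mu> mod int N = int a) = (edeg \<mu> mod N = a)"
    proof -
      have h2: "hdeg n \<mu> = int (edeg \<mu>) + (- int (vexp \<mu>)) * int N" using hd by simp
      have "hdeg n \<mu> mod int N = int (edeg \<mu>) mod int N"
        by (simp only: h2 mod_mult_self1)
      also have "\<dots> = int (edeg \<mu> mod N)" by (simp add: of_nat_mod)
      finally show ?thesis by simp
    qed
    have "(\<Sum>d\<in>Dset. if hdeg n \<mu> = d then (if d mod int N = int a then Poly_Mapping.single (\<mu> + Poly_Mapping.single Vv (T d)) (1::bit) else 0) else 0)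
        = (if hdeg n \<mu> mod int N = int a then Poly_Mapping.single (\<mu> + Poly_Mapping.single Vv (T (hdeg n \<mu>))) 1 else 0)"
      using inD fin by (simp add: sum.delta)
    also have "\<dots> = Gf (dropV \<mu>)"
    proof (cases "edeg \<mu> mod N = a")
      case True
      have ea: "a \<le> edeg \<mu>" using True by (metis mod_less_eq_dividend)
      have dv: "(int (edeg \<mu>) - int a) div int N = int ((edeg \<mu> - a) div N)"
        using ea by (simp add: of_nat_diff zdiv_int)
      have "(hdeg n \<mu> - int a) div int N = (int (edeg \<mu>) - int a) div int N - int (vexp \<mu>)"
      proof -
        have h3: "hdeg n \<mu> - int a = (int (edeg \<mu>) - int a) + (- int (vexp \<mu>)) * int N" unfolding hd by (simp add: algebra_simps)
        have "(hdeg n \<mu> - int a) div int N = - int (vexp \<mu>) + (int (edeg \<mu>) - int a) div int N"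
          unfolding h3 by (rule div_mult_self1) (use Npos in simp)
        then show ?thesis by simp
      qed
      then have Teq: "T (hdeg n \<mu>) = (edeg \<mu> - a) div N + C - vexp \<mu>"
        unfolding T_def dv using vC[OF mu] by simp
      have "\<mu> + Poly_Mapping.single Vv (T (hdeg n \<mu>)) = dropV \<mu> + Poly_Mapping.single Vv (vexp \<mu>) + Poly_Mapping.single Vv (T (hdeg n \<mu>))"
        by (simp add: dropV_vexp)
      also have "\<dots> = dropV \<mu> + Poly_Mapping.single Vv ((edeg \<mu> - a) div N + C)"
        unfolding add.assoc single_add[symmetric] Teq using vC[OF mu] by simp
      finally show ?thesis using True cls unfolding Gf_def by (simp add: edeg_dropV)
    next
      case False
      then show ?thesis using cls unfolding Gf_def by (simp add: edeg_dropV)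
    qed
    finally show "(\<Sum>d\<in>Dset. if hdeg n \<mu> = d then (if d mod int N = int a then Poly_Mapping.single (\<mu> + Poly_Mapping.single Vv (T d)) 1 else 0) else 0) = Gf (dropV \<mu>)" .
  qed
  have S3: "lin (\<lambda>\<mu>. Gf (dropV \<mu>)) z = lin Gf (pi z)"
    unfolding pi_def lin_lin by simp
  have pz: "pi z = mvar (E a) + w"
    using eq by (metis add.assoc mpoly_add_self add_0_right)
  have S4: "lin Gf w = 0"
    by (rule lin_vanish) (use w in \<open>simp add: Gf_def N_def\<close>)
  have S5: "lin Gf (mvar (E a)) = mvar Vv ^ C * mvar (E a)"
  proof -
    have "mvar Vv ^ C * mvar (E a) = Poly_Mapping.single (Poly_Mapping.single Vv C + Poly_Mapping.single (E a) 1) 1"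
      by (simp only: mvar_pow) (simp add: mvar_def mult_single)
    moreover have "lin Gf (mvar (E a)) = Poly_Mapping.single (Poly_Mapping.single (E a) 1 + Poly_Mapping.single Vv C) 1"
      using aN by (simp add: mvar_def Gf_def N_def ew_def)
    ultimately show ?thesis by (simp add: add.commute)
  qed
  have "mvar Vv ^ C * mvar (E a) = (\<Sum>d\<in>Dset. Q d)"
    unfolding S1 S2 S3 pz lin_add S4 S5 by simp
  then show ?thesis using QI sat_pow[OF sat] by metis
qed

lemma geo_sum: "(\<Sum>l<j. (2::nat) ^ (j - l)) + 2 = 2 ^ (j + 1)"
proof (induction j)
  case 0 then show ?case by simp
next
  case (Suc j)
  have "(\<Sum>l<Suc j. (2::nat) ^ (Suc j - l)) = (\<Sum>l<j. 2 ^ (Suc j - l)) + 2"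
    by simp
  also have "(\<Sum>l<j. (2::nat) ^ (Suc j - l)) = 2 * (\<Sum>l<j. 2 ^ (j - l))"
    unfolding sum_distrib_left by (rule sum.cong) (auto simp: Suc_diff_le)
  finally show ?case using Suc by simp
qed

lemma geo_bound: "Y \<subseteq> {..<j} \<Longrightarrow> (\<Sum>l\<in>Y. (2::nat) ^ (j - l)) + 2 \<le> 2 ^ (j + 1)"
  using sum_mono2[of "{..<j}" Y "\<lambda>l. (2::nat) ^ (j - l)"] geo_sum[of j] by simp

lemma geo_even: "Y \<subseteq> {..<j} \<Longrightarrow> even (\<Sum>l\<in>Y. (2::nat) ^ (j - l))"
  by (rule dvd_sum) (auto simp: subset_iff)

lemma num_main:
  fixes N k j q :: nat and Bf :: "nat \<Rightarrow> nat" and Y :: "nat set"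
  assumes kq: "k = 2 ^ j * q" and k1: "k \<ge> 1" and kN: "2 * k < N" and j1: "j \<ge> 1"
    and Y: "Y \<subseteq> {..<j}" and Bf: "\<And>l. Bf l = N - k div 2 ^ l"
  shows "(Bf j + (\<Sum>l\<in>Y. Bf l)) mod N \<noteq> N - k"
proof
  assume H: "(Bf j + (\<Sum>l\<in>Y. Bf l)) mod N = N - k"
  have q1: "q \<ge> 1" using kq k1 by (cases q) auto
  have kd: "k div 2 ^ l = q * 2 ^ (j - l)" if "l \<le> j" for l
  proof -
    have "k = 2 ^ l * (q * 2 ^ (j - l))" using kq that by (simp add: power_add[symmetric] algebra_simps)
    then show ?thesis by simp
  qed
  have Bl: "Bf l + q * 2 ^ (j - l) = N" if "l \<le> j" for l
  proof -
    have "k div 2 ^ l \<le> k" by (rule div_le_dividend)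
    then show ?thesis using Bf[of l] kd[OF that] kN by simp
  qed
  define s where "s = (\<Sum>l\<in>Y. (2::nat) ^ (j - l))"
  have finY: "finite Y" using Y finite_subset by blast
  have sumY: "(\<Sum>l\<in>Y. Bf l) + q * s = card Y * N"
  proof -
    have "(\<Sum>l\<in>Y. Bf l) + q * s = (\<Sum>l\<in>Y. Bf l + q * 2 ^ (j - l))"
      unfolding s_def sum_distrib_left sum.distrib ..
    also have "\<dots> = (\<Sum>l\<in>Y. N)" using Y by (intro sum.cong refl Bl) auto
    finally show ?thesis by simp
  qed
  have Bj: "Bf j + q = N" using Bl[of j] by simp
  have sb: "s + 2 \<le> 2 * 2 ^ j" using geo_bound[OF Y] unfolding s_def by simp
  have qt: "q * (1 + s) + q \<le> 2 * k"
  proof -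
    have "q * (1 + s) + q = q * (s + 2)" by (simp add: algebra_simps)
    also have "\<dots> \<le> q * (2 * 2 ^ j)" by (rule mult_le_mono2[OF sb])
    finally show ?thesis using kq by (simp add: algebra_simps)
  qed
  have tot: "Bf j + (\<Sum>l\<in>Y. Bf l) + q * (1 + s) = N + card Y * N"
    using sumY Bj by (simp add: algebra_simps)
  have lt: "q * (1 + s) < N" using qt kN q1 by linarith
  have pos: "q * (1 + s) > 0" using q1 by simp
  have e1: "Bf j + (\<Sum>l\<in>Y. Bf l) = (N - q * (1 + s)) + card Y * N" using tot lt by linarith
  have "(Bf j + (\<Sum>l\<in>Y. Bf l)) mod N = (N - q * (1 + s)) mod N"
    unfolding e1 by (rule mod_mult_self1)
  also have "\<dots> = N - q * (1 + s)" using pos lt by (intro mod_less) linarith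
  finally have "(Bf j + (\<Sum>l\<in>Y. Bf l)) mod N = N - q * (1 + s)" .
  then have "N - q * (1 + s) = N - k" using H by simp
  then have "q * (1 + s) = k" using lt kN by linarith
  then have "q * (1 + s) = q * 2 ^ j" using kq by (simp add: mult.commute)
  then have "1 + s = 2 ^ j" using q1 by (metis mult_cancel1 not_one_le_zero)
  moreover have "even s" using geo_even[OF Y] unfolding s_def .
  moreover have "even ((2::nat) ^ j)" using j1 by simp
  ultimately show False by (metis even_plus_one_iff add.commute)
qed

lemma prod_mvar: "finite X \<Longrightarrow> (\<Prod>l\<in>X. mvar (h l)) = Poly_Mapping.single (\<Sum>l\<in>X. Poly_Mapping.single (h l) 1) (1::bit)"
  unfolding mvar_def by (rule prod_single)

lemma term_expand:
  fixes B :: "nat \<Rightarrow> nat"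
  shows "mvar TV ^ (j+1) * mvar (TL (B j)) * mvar (TR (B j)) * (\<Prod>l<j. mvar (TL (B l)) + mvar (TR (B l)))
   = (\<Sum>X\<in>Pow {..<j}. Poly_Mapping.single (Poly_Mapping.single TV (j+1) + Poly_Mapping.single (TL (B j)) 1 + Poly_Mapping.single (TR (B j)) 1
        + (\<Sum>l\<in>X. Poly_Mapping.single (TL (B l)) 1) + (\<Sum>l\<in>{..<j}-X. Poly_Mapping.single (TR (B l)) 1)) (1::bit))"
proof -
  have P: "(\<Prod>l<j. mvar (TL (B l)) + mvar (TR (B l))) = (\<Sum>X\<in>Pow {..<j}. (\<Prod>l\<in>X. mvar (TL (B l))) * (\<Prod>l\<in>{..<j}-X. mvar (TR (B l))))"
    by (rule prod_add) simp
  have c: "mvar TV ^ (j+1) * mvar (TL (B j)) * mvar (TR (B j)) = Poly_Mapping.single (Poly_Mapping.single TV (j+1) + Poly_Mapping.single (TL (B j)) 1 + Poly_Mapping.single (TR (B j)) 1) (1::bit)"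
    by (simp only: mvar_pow) (simp add: mvar_def mult_single)
  show ?thesis unfolding P c sum_distrib_left
  proof (rule sum.cong[OF refl])
    fix X assume "X \<in> Pow {..<j}"
    then have fX: "finite X" by (meson PowD finite_lessThan finite_subset)
    show "Poly_Mapping.single (Poly_Mapping.single TV (j+1) + Poly_Mapping.single (TL (B j)) 1 + Poly_Mapping.single (TR (B j)) 1) 1 *
          ((\<Prod>l\<in>X. mvar (TL (B l))) * (\<Prod>l\<in>{..<j}-X. mvar (TR (B l)))) =
         Poly_Mapping.single (Poly_Mapping.single TV (j+1) + Poly_Mapping.single (TL (B j)) 1 + Poly_Mapping.single (TR (B j)) 1
        + (\<Sum>l\<in>X. Poly_Mapping.single (TL (B l)) 1) + (\<Sum>l\<in>{..<j}-X. Poly_Mapping.single (TR (B l)) 1)) 1"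
      by (simp add: prod_mvar fX mult_single add.assoc)
  qed
qed

lemma Rm_mon: "Rm (Poly_Mapping.single TV c + Poly_Mapping.single (TL b) 1 + Poly_Mapping.single (TR b) 1
        + (\<Sum>l\<in>X. Poly_Mapping.single (TL (B l)) 1) + (\<Sum>l\<in>Y. Poly_Mapping.single (TR (B l)) 1))
   = Poly_Mapping.single (E b) 1 + (\<Sum>l\<in>Y. Poly_Mapping.single (E (B l)) 1)"
  by (simp add: mlin_add mlin_sum gRm_def)

lemma Lm_mon: "Lm (Poly_Mapping.single TV c + Poly_Mapping.single (TL b) 1 + Poly_Mapping.single (TR b) 1
        + (\<Sum>l\<in>X. Poly_Mapping.single (TL (B l)) 1) + (\<Sum>l\<in>Y. Poly_Mapping.single (TR (B l)) 1))
   = Poly_Mapping.single (E b) 1 + (\<Sum>l\<in>X. Poly_Mapping.single (E (B l)) 1)"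
  by (simp add: mlin_add mlin_sum gLm_def)

lemma edeg_mon: "edeg (Poly_Mapping.single (E b) 1 + (\<Sum>l\<in>Y. Poly_Mapping.single (E (B l)) 1)) = b + (\<Sum>l\<in>Y. B l)"
  by (simp add: edeg_add edeg_sum ew_def)

lemma Psi_dgen:
  fixes n k :: nat and f :: "hvar mpoly \<Rightarrow> bit"
  assumes fadd: "\<And>x y. f (x + y) = f x + f y"
    and fbad: "\<And>m. edeg m mod (2^n - 1) \<noteq> 2^n - 1 - k \<Longrightarrow> f (Poly_Mapping.single m 1) = 0"
    and n1: "n \<ge> 1" and k1: "k \<ge> 1" and kN: "2 * k < 2^n - 1"
  shows "Psi f (dgen n (2^n - 1 - 2*k)) = mconst (f (mvar (E (2^n - 1 - k)))) * mvar (E (2^n - 1 - k))"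
proof -
  define N where "N = (2::nat)^n - 1"
  define i where "i = N - 2*k"
  define a where "a = N - k"
  define \<nu> where "\<nu> = multiplicity (2::nat) k"
  define B where "B l = br n (k div 2 ^ l)" for l
  have kN': "2 * k < N" using kN N_def by simp
  have m0: "(2::nat)^n = 2 * 2^(n-1)" using n1 by (cases n) auto
  obtain M where m: "(2::nat)^n = 2 * M" using m0 by blast
  have "odd (2 * M - 1 - 2 * k)" using m kN by presburger
  then have iodd: "odd i" unfolding i_def N_def m .
  have i0: "i \<noteq> 0" using iodd by (metis even_zero)
  have ilt: "i < 2^n - 1" "i \<noteq> 2^n - 1" using k1 kN unfolding i_def N_def by auto
  have kk: "(2^n - 1 - i) div 2 = k" unfolding i_def N_def using kN by simp
  define T where "T j = mvar TV ^ (j + 1) * mvar (TL (B j)) * mvar (TR (B j)) * (\<Prod>l<j. mvar (TL (B l)) + mvar (TR (B l)))" for j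
  have dg: "dgen n i = mvar (TL i) + mvar (TR i) + (\<Sum>j\<le>\<nu>. T j)"
  proof -
    have "dgen n i = delta_odd n i" using i0 iodd by (subst dgen.simps) simp
    also have "\<dots> = mvar (TL i) + mvar (TR i) + (\<Sum>j\<le>\<nu>. T j)"
      unfolding delta_odd_def using ilt kk by (simp add: Let_def T_def B_def \<nu>_def)
    finally show ?thesis .
  qed
  have f0: "f 0 = 0" using fadd[of 0 0] by simp
  have aN: "a < N" "a > 0" using kN' k1 unfolding a_def by auto
  have P1: "Psi f (mvar (TL i)) = 0"
  proof -
    have "f (Poly_Mapping.single 0 1) = 0" using aN by (intro fbad) (simp add: a_def N_def)
    then show ?thesis by (simp add: mvar_def Psi_single gRm_def)
  qed
  have P2: "Psi f (mvar (TR i)) = 0"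
  proof -
    have "i < N" "i \<noteq> a" unfolding i_def a_def using kN' k1 by auto
    then have "f (Poly_Mapping.single (Poly_Mapping.single (E i) 1) 1) = 0"
      by (intro fbad) (simp add: ew_def a_def N_def)
    then show ?thesis by (simp add: mvar_def Psi_single gRm_def)
  qed
  have P3: "Psi f (T j) = (if j = 0 then mconst (f (mvar (E a))) * mvar (E a) else 0)" if j\<nu>: "j \<le> \<nu>" for j
  proof -
    have "Psi f (T j) = (\<Sum>X\<in>Pow {..<j}. mconst (f (Poly_Mapping.single (Poly_Mapping.single (E (B j)) 1 + (\<Sum>l\<in>{..<j}-X. Poly_Mapping.single (E (B l)) 1)) 1))
          * Poly_Mapping.single (Poly_Mapping.single (E (B j)) 1 + (\<Sum>l\<in>X. Poly_Mapping.single (E (B l)) 1)) 1)"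
      unfolding T_def term_expand Psi_sum Psi_single Rm_mon Lm_mon ..
    also have "\<dots> = (if j = 0 then mconst (f (mvar (E a))) * mvar (E a) else 0)"
    proof (cases "j = 0")
      case True
      have "B 0 = a" unfolding B_def a_def N_def br_def by simp
      then show ?thesis using True by (simp add: mvar_def)
    next
      case False
      have dv: "2 ^ j dvd k" unfolding \<nu>_def using j\<nu> \<nu>_def by (intro multiplicity_dvd') simp
      then obtain q where kq: "k = 2 ^ j * q" by blast
      have "f (Poly_Mapping.single (Poly_Mapping.single (E (B j)) 1 + (\<Sum>l\<in>{..<j}-X. Poly_Mapping.single (E (B l)) 1)) 1) = 0"
        if "X \<in> Pow {..<j}" for X
      proof (rule fbad)
        have "(B j + (\<Sum>l\<in>{..<j}-X. B l)) mod N \<noteq> N - k"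
          by (rule num_main[OF kq k1 kN']) (use False in \<open>auto simp: B_def br_def N_def\<close>)
        then show "edeg (Poly_Mapping.single (E (B j)) 1 + (\<Sum>l\<in>{..<j}-X. Poly_Mapping.single (E (B l)) 1)) mod (2 ^ n - 1) \<noteq> 2 ^ n - 1 - k"
          unfolding edeg_mon N_def .
      qed
      then show ?thesis using False by simp
    qed
    finally show ?thesis .
  qed
  have "Psi f (dgen n i) = (\<Sum>j\<le>\<nu>. if j = 0 then mconst (f (mvar (E a))) * mvar (E a) else 0)"
    unfolding dg Psi_add Psi_sum P1 P2 by (simp add: P3)
  also have "\<dots> = mconst (f (mvar (E a))) * mvar (E a)" by (simp add: sum.delta)
  finally show ?thesis unfolding i_def a_def N_def .
qed

interpretation mvs: vector_space "\<lambda>(c::bit) (p::hvar mpoly). mconst c * p"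
  by unfold_locales (simp_all only: distrib_left mconst_add distrib_right mconst_mult mult.assoc mconst_1 mult_1)

interpretation vp: vector_space_pair "\<lambda>(c::bit) (p::hvar mpoly). mconst c * p" "(*) :: bit \<Rightarrow> bit \<Rightarrow> bit"
  by unfold_locales (simp_all only: distrib_left distrib_right mult.assoc mult_1)

lemma functional:
  assumes "e \<notin> mvs.span W"
  obtains f :: "hvar mpoly \<Rightarrow> bit" where "\<And>x y. f (x + y) = f x + f y" "\<And>x. x \<in> mvs.span W \<Longrightarrow> f x = 0" "f e = 1"
proof -
  obtain B where B: "B \<subseteq> mvs.span W" "mvs.independent B" "mvs.span W \<subseteq> mvs.span B"
    using mvs.maximal_independent_subset[of "mvs.span W"] by blast
  have "mvs.span B \<subseteq> mvs.span W" using mvs.span_mono[OF B(1)] mvs.span_span by blast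
  then have sB: "mvs.span B = mvs.span W" using B(3) by blast
  have eB: "e \<notin> mvs.span B" using assms sB by simp
  have eB': "e \<notin> B" using eB mvs.span_superset by blast
  have ind: "mvs.independent (insert e B)" by (rule mvs.independent_insertI[OF eB B(2)])
  define f where "f = vp.construct (insert e B) (\<lambda>b. if b = e then 1 else 0)"
  have lin: "Vector_Spaces.linear (\<lambda>(c::bit) (p::hvar mpoly). mconst c * p) ((*) :: bit \<Rightarrow> bit \<Rightarrow> bit) f"
    unfolding f_def by (rule vp.linear_construct[OF ind])
  have fb: "f b = (if b = e then 1 else 0)" if "b \<in> insert e B" for b
    unfolding f_def by (rule vp.construct_basis[OF ind that])
  show ?thesis
  proof (rule that[of f])
    show "f (x + y) = f x + f y" for x y by (rule vp.linear_add[OF lin])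
    show "f x = 0" if "x \<in> mvs.span W" for x
    proof (rule vp.linear_eq_0_on_span[OF lin])
      show "f b = 0" if "b \<in> B" for b using fb[of b] that eB' by auto
      show "x \<in> mvs.span B" using that sB by simp
    qed
    show "f e = 1" using fb[of e] by simp
  qed
qed

theorem propositionA3p1:
  fixes n m k :: nat and I :: "hvar mpoly set"
  assumes "n \<ge> 1" and "m \<le> 2 ^ (n + 1)"
    and "bi_ideal n m I" and "homogeneous_ideal n I" and "saturated I"
    and "k \<ge> 1" and "int (2 ^ n) - 1 - 2 * int k \<ge> 1"
    and "mvar (E (2 ^ n - 1 - 2 * k)) \<in> I"
  shows "mvar (E (2 ^ n - 1 - k)) \<in> I"
proof -
  note n1 = assms(1) and bi = assms(3) and hom = assms(4) and sat = assms(5) and k1 = assms(6)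
  have Iid: "is_ideal I" using bi unfolding bi_ideal_def H_ideal_def by blast
  have kN: "2 * k < 2 ^ n - 1" using assms(7) by linarith
  define a where "a = 2 ^ n - 1 - k"
  have aN: "a < 2 ^ n - 1" using k1 kN unfolding a_def by simp
  define W0 where "W0 = pi ` I \<union> {Poly_Mapping.single mm 1 | mm. edeg mm mod (2^n - 1) \<noteq> a}"
  have Dl: "Delta n (mvar (E (2 ^ n - 1 - 2 * k))) \<in> gen_ideal (embL ` I \<union> embR ` I)"
    using bi assms(8) unfolding bi_ideal_def by blast
  have "Delta n (mvar (E (2 ^ n - 1 - 2 * k))) = dgen n (2 ^ n - 1 - 2 * k)"
    by (simp only: Delta_def peval_mvar hvar.case)
  then have dgG: "dgen n (2 ^ n - 1 - 2 * k) \<in> Gs I"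
    using Dl gen_ideal_Gs by (metis subsetD)
  have inspan: "mvar (E a) \<in> mvs.span W0"
  proof (rule ccontr)
    assume nin: "mvar (E a) \<notin> mvs.span W0"
    obtain f :: "hvar mpoly \<Rightarrow> bit" where fadd: "\<And>x y. f (x + y) = f x + f y"
      and fW: "\<And>x. x \<in> mvs.span W0 \<Longrightarrow> f x = 0" and fe: "f (mvar (E a)) = 1"
      using functional[OF nin] by blast
    have fK: "f (pi z) = 0" if "z \<in> I" for z
      using that by (intro fW mvs.span_base) (simp add: W0_def)
    have fbad: "f (Poly_Mapping.single mm 1) = 0" if "edeg mm mod (2^n - 1) \<noteq> 2^n - 1 - k" for mm
      using that by (intro fW mvs.span_base) (auto simp: W0_def a_def)
    have "Psi f (dgen n (2 ^ n - 1 - 2 * k)) \<in> pi ` I"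
      by (rule Psi_Gs[OF fadd fK Iid dgG])
    moreover have "Psi f (dgen n (2 ^ n - 1 - 2 * k)) = mvar (E a)"
      using Psi_dgen[OF fadd fbad n1 k1 kN] fe unfolding a_def by simp
    ultimately have "mvar (E a) \<in> W0" unfolding W0_def by simp
    then show False using \<open>mvar (E a) \<notin> mvs.span W0\<close> mvs.span_base by blast
  qed
  define S where "S = {pi z + w | z w. z \<in> I \<and> (\<forall>mm\<in>Poly_Mapping.keys w. edeg mm mod (2^n - 1) \<noteq> a)}"
  have I0: "0 \<in> I" and Iadd: "\<And>x y. x \<in> I \<Longrightarrow> y \<in> I \<Longrightarrow> x + y \<in> I"
    using Iid unfolding is_ideal_def by auto
  have subS: "mvs.subspace S"
  proof (rule mvs.subspaceI)
    have "(0::hvar mpoly) = pi 0 + 0 \<and> 0 \<in> I \<and> (\<forall>mm\<in>Poly_Mapping.keys (0::hvar mpoly). edeg mm mod (2^n - 1) \<noteq> a)" using I0 by simp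
    then show "0 \<in> S" unfolding S_def by blast
    show "x + y \<in> S" if xyS: "x \<in> S" "y \<in> S" for x y
    proof -
      obtain z1 w1 z2 w2 where "x = pi z1 + w1" "z1 \<in> I" "\<forall>mm\<in>Poly_Mapping.keys w1. edeg mm mod (2^n - 1) \<noteq> a"
        "y = pi z2 + w2" "z2 \<in> I" "\<forall>mm\<in>Poly_Mapping.keys w2. edeg mm mod (2^n - 1) \<noteq> a"
        using xyS unfolding S_def by blast
      moreover have "Poly_Mapping.keys (w1 + w2) \<subseteq> Poly_Mapping.keys w1 \<union> Poly_Mapping.keys w2" by (rule keys_add)
      ultimately have "x + y = pi (z1 + z2) + (w1 + w2) \<and> z1 + z2 \<in> I \<and> (\<forall>mm\<in>Poly_Mapping.keys (w1 + w2). edeg mm mod (2^n - 1) \<noteq> a)"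
        using Iadd by (auto simp: pi_add algebra_simps)
      then show ?thesis unfolding S_def by blast
    qed
    show "mconst c * x \<in> S" if "x \<in> S" for c x
      using bit_cases2[of c] that \<open>0 \<in> S\<close> by auto
  qed
  have "W0 \<subseteq> S"
  proof
    fix x assume "x \<in> W0"
    then consider (a) z where "z \<in> I" "x = pi z" | (b) mm where "x = Poly_Mapping.single mm 1" "edeg mm mod (2^n - 1) \<noteq> a"
      unfolding W0_def by blast
    then show "x \<in> S"
    proof cases
      case a
      then have "x = pi z + 0 \<and> z \<in> I \<and> (\<forall>mm\<in>Poly_Mapping.keys (0::hvar mpoly). edeg mm mod (2^n - 1) \<noteq> a)" by simp
      then show ?thesis unfolding S_def by blast
    next
      case b
      then have "x = pi 0 + x \<and> 0 \<in> I \<and> (\<forall>mm'\<in>Poly_Mapping.keys x. edeg mm' mod (2^n - 1) \<noteq> a)" using I0 by simp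
      then show ?thesis unfolding S_def by blast
    qed
  qed
  then have "mvs.span W0 \<subseteq> S" using mvs.span_minimal subS by blast
  then obtain z w where zw: "mvar (E a) = pi z + w" "z \<in> I" "\<forall>mm\<in>Poly_Mapping.keys w. edeg mm mod (2^n - 1) \<noteq> a"
    using inspan unfolding S_def by blast
  have "mvar (E a) \<in> I" by (rule lift[OF Iid hom sat aN zw(2) zw(3) zw(1)])
  then show ?thesis unfolding a_def .
qed

end
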